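(* Let $A$ be a congruence--distributive algebra in a variety $\mathcal{V}$ and let $\alpha$ be an atom of the lattice ${\rm Con}_{\mathcal{V}}(A)$. Then $|{\rm Con}_{\mathcal{V}}(A)|\leq 2\cdot|{\rm Con}_{\mathcal{V}}(A/\alpha)|$.
   Context: ${\rm Con}_{\mathcal{V}}(A)$ denotes the lattice of congruences of $A$ with respect to the type of $\mathcal{V}$; $A$ is congruence--distributive if this lattice is distributive. *)

theory Defs
  imports Main
begin

definition is_algebra :: "('f \<Rightarrow> nat) \<Rightarrow> 'a set \<Rightarrow> ('f \<Rightarrow> 'a list \<Rightarrow> 'a) \<Rightarrow> bool" where
  "is_algebra ar A op \<longleftrightarrow>
     (\<forall>f xs. length xs = ar f \<longrightarrow> set xs \<subseteq> A \<longrightarrow> op f xs \<in> A)"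

definition is_congruence :: "('f \<Rightarrow> nat) \<Rightarrow> 'a set \<Rightarrow> ('f \<Rightarrow> 'a list \<Rightarrow> 'a) \<Rightarrow> 'a rel \<Rightarrow> bool" where
  "is_congruence ar A op \<theta> \<longleftrightarrow> equiv A \<theta> \<and>
     (\<forall>f xs ys. length xs = ar f \<longrightarrow> length ys = ar f \<longrightarrow>
        (\<forall>i < ar f. (xs ! i, ys ! i) \<in> \<theta>) \<longrightarrow> (op f xs, op f ys) \<in> \<theta>)"

definition Con :: "('f \<Rightarrow> nat) \<Rightarrow> 'a set \<Rightarrow> ('f \<Rightarrow> 'a list \<Rightarrow> 'a) \<Rightarrow> 'a rel set" where
  "Con ar A op = {\<theta>. is_congruence ar A op \<theta>}"

definition con_join :: "('f \<Rightarrow> nat) \<Rightarrow> 'a set \<Rightarrow> ('f \<Rightarrow> 'a list \<Rightarrow> 'a) \<Rightarrow> 'a rel \<Rightarrow> 'a rel \<Rightarrow> 'a rel" where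
  "con_join ar A op \<theta> \<phi> = \<Inter> {\<psi> \<in> Con ar A op. \<theta> \<union> \<phi> \<subseteq> \<psi>}"

definition congruence_distributive :: "('f \<Rightarrow> nat) \<Rightarrow> 'a set \<Rightarrow> ('f \<Rightarrow> 'a list \<Rightarrow> 'a) \<Rightarrow> bool" where
  "congruence_distributive ar A op \<longleftrightarrow>
     (\<forall>\<theta>\<in>Con ar A op. \<forall>\<phi>\<in>Con ar A op. \<forall>\<psi>\<in>Con ar A op.
        \<theta> \<inter> con_join ar A op \<phi> \<psi> = con_join ar A op (\<theta> \<inter> \<phi>) (\<theta> \<inter> \<psi>))"

definition con_atom :: "('f \<Rightarrow> nat) \<Rightarrow> 'a set \<Rightarrow> ('f \<Rightarrow> 'a list \<Rightarrow> 'a) \<Rightarrow> 'a rel \<Rightarrow> bool" where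
  "con_atom ar A op \<alpha> \<longleftrightarrow> \<alpha> \<in> Con ar A op \<and> \<alpha> \<noteq> Id_on A \<and>
     (\<forall>\<theta>\<in>Con ar A op. Id_on A \<subseteq> \<theta> \<and> \<theta> \<subseteq> \<alpha> \<longrightarrow> \<theta> = Id_on A \<or> \<theta> = \<alpha>)"

definition quot_op :: "('f \<Rightarrow> 'a list \<Rightarrow> 'a) \<Rightarrow> 'a rel \<Rightarrow> 'f \<Rightarrow> 'a set list \<Rightarrow> 'a set" where
  "quot_op op \<alpha> f Xs = \<alpha> `` {op f (map (\<lambda>X. SOME x. x \<in> X) Xs)}"

text \<open>Cardinal inequality |X| \<le> 2\<cdot>|Y|, i.e. X injects into Y \<times> 2.\<close>
definition card_le_twice :: "'a set \<Rightarrow> 'b set \<Rightarrow> bool" where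
  "card_le_twice X Y \<longleftrightarrow> (\<exists>g. inj_on g X \<and> g ` X \<subseteq> Y \<times> (UNIV :: bool set))"

end

theory Submission
  imports Defs
begin

lemma equiv_simp: "equiv A r \<longleftrightarrow> r \<subseteq> A \<times> A \<and> (\<forall>x\<in>A. (x,x)\<in>r) \<and> (\<forall>x y. (x,y)\<in>r \<longrightarrow> (y,x)\<in>r)
   \<and> (\<forall>x y z. (x,y)\<in>r \<longrightarrow> (y,z)\<in>r \<longrightarrow> (x,z)\<in>r)"
  unfolding equiv_def refl_on_def sym_def trans_def by blast

lemma full_con:
  assumes "is_algebra ar A op"
  shows "A \<times> A \<in> Con ar A op"
  unfolding Con_def is_congruence_def
proof (intro CollectI conjI allI impI)
  show "equiv A (A \<times> A)" unfolding equiv_simp by blast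
  fix f xs ys assume l: "length xs = ar f" "length ys = ar f"
    and r: "\<forall>i<ar f. (xs ! i, ys ! i) \<in> A \<times> A"
  have "set xs \<subseteq> A" "set ys \<subseteq> A" using l r by (auto simp: in_set_conv_nth)
  then show "(op f xs, op f ys) \<in> A \<times> A" using assms l unfolding is_algebra_def by blast
qed

lemma Inter_con:
  assumes "S \<subseteq> Con ar A op" "S \<noteq> {}"
  shows "\<Inter>S \<in> Con ar A op"
proof -
  have E: "\<And>\<theta>. \<theta> \<in> S \<Longrightarrow> equiv A \<theta>" and C: "\<And>\<theta> f xs ys. \<theta> \<in> S \<Longrightarrow> length xs = ar f \<Longrightarrow> length ys = ar f \<Longrightarrow>
        (\<forall>i < ar f. (xs ! i, ys ! i) \<in> \<theta>) \<Longrightarrow> (op f xs, op f ys) \<in> \<theta>"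
    using assms(1) unfolding Con_def is_congruence_def by blast+
  have "equiv A (\<Inter>S)" using E assms(2) unfolding equiv_simp by blast
  moreover have "\<forall>f xs ys. length xs = ar f \<longrightarrow> length ys = ar f \<longrightarrow>
        (\<forall>i < ar f. (xs ! i, ys ! i) \<in> \<Inter>S) \<longrightarrow> (op f xs, op f ys) \<in> \<Inter>S"
    using C by blast
  ultimately show ?thesis unfolding Con_def is_congruence_def by blast
qed

lemma join_con:
  assumes "is_algebra ar A op" "\<theta> \<in> Con ar A op" "\<phi> \<in> Con ar A op"
  shows "con_join ar A op \<theta> \<phi> \<in> Con ar A op" "\<theta> \<union> \<phi> \<subseteq> con_join ar A op \<theta> \<phi>"
proof -
  have "\<theta> \<subseteq> A \<times> A" "\<phi> \<subseteq> A \<times> A" using assms(2,3) unfolding Con_def is_congruence_def equiv_def by blast+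
  then have "A \<times> A \<in> {\<psi> \<in> Con ar A op. \<theta> \<union> \<phi> \<subseteq> \<psi>}" using full_con[OF assms(1)] by blast
  then show "con_join ar A op \<theta> \<phi> \<in> Con ar A op" unfolding con_join_def
    by (intro Inter_con) auto
  show "\<theta> \<union> \<phi> \<subseteq> con_join ar A op \<theta> \<phi>" unfolding con_join_def by blast
qed

lemma join_least:
  assumes "\<chi> \<in> Con ar A op" "\<theta> \<union> \<phi> \<subseteq> \<chi>"
  shows "con_join ar A op \<theta> \<phi> \<subseteq> \<chi>"
  using assms unfolding con_join_def by blast

lemma int_con:
  assumes "\<theta> \<in> Con ar A op" "\<phi> \<in> Con ar A op"
  shows "\<theta> \<inter> \<phi> \<in> Con ar A op"
  using Inter_con[of "{\<theta>,\<phi>}" ar A op] assms by auto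

lemma con_refl:
  assumes "\<theta> \<in> Con ar A op" shows "Id_on A \<subseteq> \<theta>" "\<theta> \<subseteq> A \<times> A"
  using assms unfolding Con_def is_congruence_def equiv_simp by auto

lemma join_Id:
  assumes "\<theta> \<in> Con ar A op"
  shows "con_join ar A op \<theta> (Id_on A) = \<theta>"
proof
  show "con_join ar A op \<theta> (Id_on A) \<subseteq> \<theta>" using join_least[OF assms] con_refl[OF assms] by blast
  show "\<theta> \<subseteq> con_join ar A op \<theta> (Id_on A)" unfolding con_join_def by blast
qed

lemma eqsym: "equiv A r \<Longrightarrow> (x,y)\<in>r \<Longrightarrow> (y,x)\<in>r"
  unfolding equiv_def sym_def by blast
lemma eqtrans: "equiv A r \<Longrightarrow> (x,y)\<in>r \<Longrightarrow> (y,z)\<in>r \<Longrightarrow> (x,z)\<in>r"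
  unfolding equiv_def trans_def by blast
lemma eqrefl: "equiv A r \<Longrightarrow> x\<in>A \<Longrightarrow> (x,x)\<in>r"
  unfolding equiv_def refl_on_def by blast
lemma eqsub: "equiv A r \<Longrightarrow> (x,y)\<in>r \<Longrightarrow> x\<in>A \<and> y\<in>A"
  unfolding equiv_def by blast

definition qrel :: "'a set \<Rightarrow> 'a rel \<Rightarrow> 'a rel \<Rightarrow> 'a set rel" where
  "qrel A \<alpha> \<beta> = {(X,Y). X \<in> A // \<alpha> \<and> Y \<in> A // \<alpha> \<and> (\<exists>x\<in>X. \<exists>y\<in>Y. (x,y) \<in> \<beta>)}"

lemma class_facts:
  assumes "\<alpha> \<in> Con ar A op" "X \<in> A // \<alpha>"
  shows "X \<noteq> {}" "X \<subseteq> A" "\<And>u v. u \<in> X \<Longrightarrow> v \<in> X \<Longrightarrow> (u,v) \<in> \<alpha>"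
proof -
  have E: "equiv A \<alpha>" using assms(1) unfolding Con_def is_congruence_def by blast
  obtain a where a: "a \<in> A" "X = \<alpha> `` {a}" using assms(2) by (auto elim: quotientE)
  show "X \<noteq> {}" using eqrefl[OF E a(1)] a by blast
  show "X \<subseteq> A" using eqsub[OF E] a by blast
  show "\<And>u v. u \<in> X \<Longrightarrow> v \<in> X \<Longrightarrow> (u,v) \<in> \<alpha>" using eqsym[OF E] eqtrans[OF E] a by blast
qed

lemma qrel_con:
  assumes alg: "is_algebra ar A op" and a: "\<alpha> \<in> Con ar A op" and b: "\<beta> \<in> Con ar A op"
    and ab: "\<alpha> \<subseteq> \<beta>"
  shows "qrel A \<alpha> \<beta> \<in> Con ar (A // \<alpha>) (quot_op op \<alpha>)"
proof -
  have Eb: "equiv A \<beta>" and Cb: "\<And>f xs ys. length xs = ar f \<Longrightarrow> length ys = ar f \<Longrightarrow>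
        (\<forall>i < ar f. (xs ! i, ys ! i) \<in> \<beta>) \<Longrightarrow> (op f xs, op f ys) \<in> \<beta>"
    using b unfolding Con_def is_congruence_def by blast+
  have Ea: "equiv A \<alpha>" using a unfolding Con_def is_congruence_def by blast
  note cf = class_facts[OF a]
  have "equiv (A // \<alpha>) (qrel A \<alpha> \<beta>)"
    unfolding equiv_simp
  proof (intro conjI allI impI ballI)
    show "qrel A \<alpha> \<beta> \<subseteq> A // \<alpha> \<times> A // \<alpha>" unfolding qrel_def by blast
  next
    fix X assume X: "X \<in> A // \<alpha>"
    then obtain x where "x \<in> X" using cf(1) by blast
    moreover have "(x,x) \<in> \<beta>" using cf(2)[OF X] \<open>x \<in> X\<close> eqrefl[OF Eb] by blast
    ultimately show "(X,X) \<in> qrel A \<alpha> \<beta>" using X unfolding qrel_def by blast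
  next
    fix X Y assume "(X,Y) \<in> qrel A \<alpha> \<beta>"
    then show "(Y,X) \<in> qrel A \<alpha> \<beta>" using eqsym[OF Eb] unfolding qrel_def by blast
  next
    fix X Y Z assume 1: "(X,Y) \<in> qrel A \<alpha> \<beta>" and 2: "(Y,Z) \<in> qrel A \<alpha> \<beta>"
    then obtain x y y' z where "x\<in>X" "y\<in>Y" "y'\<in>Y" "z\<in>Z" "(x,y)\<in>\<beta>" "(y',z)\<in>\<beta>"
      "X \<in> A // \<alpha>" "Y \<in> A // \<alpha>" "Z \<in> A // \<alpha>"
      unfolding qrel_def by blast
    moreover have "(y,y') \<in> \<beta>" using cf(3)[OF \<open>Y \<in> A // \<alpha>\<close> \<open>y\<in>Y\<close> \<open>y'\<in>Y\<close>] ab by blast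
    ultimately have "(x,z) \<in> \<beta>" using eqtrans[OF Eb] by blast
    then show "(X,Z) \<in> qrel A \<alpha> \<beta>" using \<open>x\<in>X\<close> \<open>z\<in>Z\<close> \<open>X \<in> A // \<alpha>\<close> \<open>Z \<in> A // \<alpha>\<close> unfolding qrel_def by blast
  qed
  moreover have "\<forall>f Xs Ys. length Xs = ar f \<longrightarrow> length Ys = ar f \<longrightarrow>
        (\<forall>i < ar f. (Xs ! i, Ys ! i) \<in> qrel A \<alpha> \<beta>) \<longrightarrow>
        (quot_op op \<alpha> f Xs, quot_op op \<alpha> f Ys) \<in> qrel A \<alpha> \<beta>"
  proof (intro allI impI)
    fix f Xs Ys assume lx: "length Xs = ar f" and ly: "length Ys = ar f"
      and r: "\<forall>i < ar f. (Xs ! i, Ys ! i) \<in> qrel A \<alpha> \<beta>"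
    define xs where "xs = map (\<lambda>X. SOME x. x \<in> X) Xs"
    define ys where "ys = map (\<lambda>X. SOME x. x \<in> X) Ys"
    have mem: "xs ! i \<in> Xs ! i" "ys ! i \<in> Ys ! i" "Xs ! i \<in> A // \<alpha>" "Ys ! i \<in> A // \<alpha>"
      if i: "i < ar f" for i
    proof -
      show X: "Xs ! i \<in> A // \<alpha>" "Ys ! i \<in> A // \<alpha>" using r i unfolding qrel_def by blast+
      show "xs ! i \<in> Xs ! i" unfolding xs_def using i lx cf(1)[OF X(1)] by (simp add: some_in_eq)
      show "ys ! i \<in> Ys ! i" unfolding ys_def using i ly cf(1)[OF X(2)] by (simp add: some_in_eq)
    qed
    have rel: "(xs ! i, ys ! i) \<in> \<beta>" if i: "i < ar f" for i
    proof -
      obtain x' y' where "x' \<in> Xs ! i" "y' \<in> Ys ! i" "(x',y') \<in> \<beta>" using r i unfolding qrel_def by blast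
      moreover have "(xs ! i, x') \<in> \<beta>" using cf(3)[OF mem(3)[OF i] mem(1)[OF i] \<open>x' \<in> Xs ! i\<close>] ab by blast
      moreover have "(y', ys ! i) \<in> \<beta>" using cf(3)[OF mem(4)[OF i] \<open>y' \<in> Ys ! i\<close> mem(2)[OF i]] ab by blast
      ultimately show ?thesis using eqtrans[OF Eb] by blast
    qed
    have lxs: "length xs = ar f" "length ys = ar f" using lx ly xs_def ys_def by auto
    have sA: "set xs \<subseteq> A" "set ys \<subseteq> A"
      using mem cf(2) lxs by (auto simp: in_set_conv_nth) (meson subsetD)+
    have inA: "op f xs \<in> A" "op f ys \<in> A" using alg sA lxs unfolding is_algebra_def by blast+
    have ob: "(op f xs, op f ys) \<in> \<beta>" using Cb[OF lxs] rel by blast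
    have q: "quot_op op \<alpha> f Xs = \<alpha> `` {op f xs}" "quot_op op \<alpha> f Ys = \<alpha> `` {op f ys}"
      unfolding quot_op_def xs_def ys_def by simp_all
    have "op f xs \<in> \<alpha> `` {op f xs}" "op f ys \<in> \<alpha> `` {op f ys}"
      using inA eqrefl[OF Ea] by blast+
    then show "(quot_op op \<alpha> f Xs, quot_op op \<alpha> f Ys) \<in> qrel A \<alpha> \<beta>"
      unfolding q qrel_def using inA ob by (auto intro: quotientI)
  qed
  ultimately show ?thesis unfolding Con_def is_congruence_def by blast
qed

lemma qrel_recover:
  assumes a: "\<alpha> \<in> Con ar A op" and b: "\<beta> \<in> Con ar A op" and ab: "\<alpha> \<subseteq> \<beta>"
  shows "\<beta> = {(x,y). x \<in> A \<and> y \<in> A \<and> (\<alpha> `` {x}, \<alpha> `` {y}) \<in> qrel A \<alpha> \<beta>}"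
proof -
  have Eb: "equiv A \<beta>" using b unfolding Con_def is_congruence_def by blast
  have Ea: "equiv A \<alpha>" using a unfolding Con_def is_congruence_def by blast
  show ?thesis
  proof (intro set_eqI iffI)
    fix p assume p: "p \<in> \<beta>"
    obtain x y where xy: "p = (x,y)" by (cases p)
    have A: "x \<in> A" "y \<in> A" using p xy eqsub[OF Eb] by blast+
    have "x \<in> \<alpha> `` {x}" "y \<in> \<alpha> `` {y}" using A eqrefl[OF Ea] by blast+
    then show "p \<in> {(x,y). x \<in> A \<and> y \<in> A \<and> (\<alpha> `` {x}, \<alpha> `` {y}) \<in> qrel A \<alpha> \<beta>}"
      using A p xy unfolding qrel_def by (auto intro: quotientI)
  next
    fix p assume p: "p \<in> {(x,y). x \<in> A \<and> y \<in> A \<and> (\<alpha> `` {x}, \<alpha> `` {y}) \<in> qrel A \<alpha> \<beta>}"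
    obtain x y where xy: "p = (x,y)" by (cases p)
    obtain x' y' where "(x,x') \<in> \<alpha>" "(y,y') \<in> \<alpha>" "(x',y') \<in> \<beta>" using p xy unfolding qrel_def by blast
    then have "(x,x') \<in> \<beta>" "(y',y) \<in> \<beta>" using ab eqsym[OF Ea] by blast+
    then show "p \<in> \<beta>" using xy eqtrans[OF Eb] \<open>(x',y') \<in> \<beta>\<close> by blast
  qed
qed

theorem lemma4p26:
  fixes ar :: "'f \<Rightarrow> nat" and A :: "'a set" and op :: "'f \<Rightarrow> 'a list \<Rightarrow> 'a"
    and \<alpha> :: "'a rel"
  assumes "is_algebra ar A op"
    and "congruence_distributive ar A op"
    and "con_atom ar A op \<alpha>"
  shows "card_le_twice (Con ar A op) (Con ar (A // \<alpha>) (quot_op op \<alpha>))"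
proof -
  note alg = assms(1)
  have aC: "\<alpha> \<in> Con ar A op" using assms(3) unfolding con_atom_def by blast
  let ?J = "con_join ar A op"
  define g where "g \<theta> = (qrel A \<alpha> (?J \<theta> \<alpha>), \<alpha> \<subseteq> \<theta>)" for \<theta>
  have atom: "\<theta> \<inter> \<alpha> = Id_on A" if t: "\<theta> \<in> Con ar A op" "\<not> \<alpha> \<subseteq> \<theta>" for \<theta>
  proof -
    have "\<theta> \<inter> \<alpha> \<in> Con ar A op" using int_con[OF t(1) aC] .
    moreover have "Id_on A \<subseteq> \<theta> \<inter> \<alpha>" using con_refl(1)[OF t(1)] con_refl(1)[OF aC] by blast
    ultimately have "\<theta> \<inter> \<alpha> = Id_on A \<or> \<theta> \<inter> \<alpha> = \<alpha>" using assms(3) unfolding con_atom_def by blast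
    then show ?thesis using t(2) by blast
  qed
  have "inj_on g (Con ar A op)"
  proof (rule inj_onI)
    fix \<theta> \<psi> assume t: "\<theta> \<in> Con ar A op" and p: "\<psi> \<in> Con ar A op" and e: "g \<theta> = g \<psi>"
    have Jt: "?J \<theta> \<alpha> \<in> Con ar A op" "\<theta> \<union> \<alpha> \<subseteq> ?J \<theta> \<alpha>" using join_con[OF alg t aC] by auto
    have Jp: "?J \<psi> \<alpha> \<in> Con ar A op" "\<psi> \<union> \<alpha> \<subseteq> ?J \<psi> \<alpha>" using join_con[OF alg p aC] by auto
    have "qrel A \<alpha> (?J \<theta> \<alpha>) = qrel A \<alpha> (?J \<psi> \<alpha>)" using e unfolding g_def by simp
    moreover have "?J \<theta> \<alpha> = {(x,y). x \<in> A \<and> y \<in> A \<and> (\<alpha> `` {x}, \<alpha> `` {y}) \<in> qrel A \<alpha> (?J \<theta> \<alpha>)}"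
      by (rule qrel_recover[OF aC Jt(1)]) (use Jt(2) in blast)
    moreover have "?J \<psi> \<alpha> = {(x,y). x \<in> A \<and> y \<in> A \<and> (\<alpha> `` {x}, \<alpha> `` {y}) \<in> qrel A \<alpha> (?J \<psi> \<alpha>)}"
      by (rule qrel_recover[OF aC Jp(1)]) (use Jp(2) in blast)
    ultimately have JJ: "?J \<theta> \<alpha> = ?J \<psi> \<alpha>" by simp
    have same: "\<alpha> \<subseteq> \<theta> \<longleftrightarrow> \<alpha> \<subseteq> \<psi>" using e unfolding g_def by simp
    show "\<theta> = \<psi>"
    proof (cases "\<alpha> \<subseteq> \<theta>")
      case True
      then have "\<alpha> \<subseteq> \<psi>" using same by blast
      have "?J \<theta> \<alpha> \<subseteq> \<theta>" using join_least[OF t, of \<theta> \<alpha>] True by blast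
      moreover have "?J \<psi> \<alpha> \<subseteq> \<psi>" using join_least[OF p, of \<psi> \<alpha>] \<open>\<alpha> \<subseteq> \<psi>\<close> by blast
      ultimately have e1: "?J \<theta> \<alpha> = \<theta>" and e2: "?J \<psi> \<alpha> = \<psi>" using Jt(2) Jp(2) by blast+
      have "\<theta> = ?J \<theta> \<alpha>" using e1 by (rule sym)
      also have "\<dots> = ?J \<psi> \<alpha>" by (rule JJ)
      also have "\<dots> = \<psi>" by (rule e2)
      finally show ?thesis .
    next
      case False
      have D: "\<And>x y z. x \<in> Con ar A op \<Longrightarrow> y \<in> Con ar A op \<Longrightarrow> z \<in> Con ar A op \<Longrightarrow>
          x \<inter> ?J y z = ?J (x \<inter> y) (x \<inter> z)" using assms(2) unfolding congruence_distributive_def by blast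
      have key: "x \<subseteq> y" if x: "x \<in> Con ar A op" and y: "y \<in> Con ar A op"
        and xa: "\<not> \<alpha> \<subseteq> x" and jj: "?J x \<alpha> = ?J y \<alpha>" for x y
      proof -
        have "x = x \<inter> ?J x \<alpha>" using join_con(2)[OF alg x aC] by blast
        also have "\<dots> = x \<inter> ?J y \<alpha>" using jj by simp
        also have "\<dots> = ?J (x \<inter> y) (x \<inter> \<alpha>)" using D[OF x y aC] .
        also have "\<dots> = ?J (x \<inter> y) (Id_on A)" using atom[OF x xa] by simp
        also have "\<dots> = x \<inter> y" using join_Id[OF int_con[OF x y]] .
        finally have "x \<inter> y = x" by (rule sym)
        then show ?thesis by (simp add: le_iff_inf)
      qed
      have np: "\<not> \<alpha> \<subseteq> \<psi>" using False same by blast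
      have "\<theta> \<subseteq> \<psi>" using key[OF t p False JJ] .
      moreover have "\<psi> \<subseteq> \<theta>" using key[OF p t np JJ[symmetric]] .
      ultimately show ?thesis by (rule subset_antisym)
    qed
  qed
  moreover have "g ` Con ar A op \<subseteq> Con ar (A // \<alpha>) (quot_op op \<alpha>) \<times> (UNIV :: bool set)"
  proof
    fix z assume "z \<in> g ` Con ar A op"
    then obtain \<theta> where t: "\<theta> \<in> Con ar A op" and z: "z = g \<theta>" by blast
    have "qrel A \<alpha> (?J \<theta> \<alpha>) \<in> Con ar (A // \<alpha>) (quot_op op \<alpha>)"
      using qrel_con[OF alg aC] join_con[OF alg t aC] by blast
    then show "z \<in> Con ar (A // \<alpha>) (quot_op op \<alpha>) \<times> (UNIV :: bool set)" using z g_def by simp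
  qed
  ultimately show ?thesis unfolding card_le_twice_def by blast
qed

end
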